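(* Let $G$ be a finite group and $H$ a normal subgroup of $G$ such that $G/H$ is cyclic of order $n$. For each divisor $d$ of $n$, let $K_d$ be the unique subgroup of $G$ containing $H$ with $|K_d:H|=d$, let $\Gamma_d$ be a coset of $H$ whose order in $G/H$ is $d$, let $T_d$ be the number of $G$-conjugacy classes contained in $\Gamma_d$, let $S_d$ be the number of $G$-conjugacy classes contained in $K_d$, and let $S^*_d$ be the number of conjugacy classes of the group $K_d$ (under its own conjugation action). Then for every divisor $d$ of $n$: (1) $\displaystyle S^*_d=n\sum_{c\mid n}\sum_{a\mid c}\mu(c/a)\frac{\gcd(a,d)}{\operatorname{lcm}(a,d)}T_c$; (2) $\displaystyle S^*_d=n\sum_{c\mid n}\sum_{a\mid c}\sum_{b\mid c}\frac{\mu(c/a)\mu(c/b)}{\phi(c)}\frac{\gcd(a,d)}{\operatorname{lcm}(a,d)}S_b$, where $\mu$ is the Möbius function and $\phi$ is Euler's totient function.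
   Context: $T_d$ does not depend on the choice of the coset $\Gamma_d$ of order $d$ in $G/H$. All sums are over positive divisors. *)

theory Defs
  imports "HOL-Algebra.Algebra" "HOL-Computational_Algebra.Squarefree" "HOL-Number_Theory.Number_Theory"
begin

text \<open>Moebius function on positive integers (value 0 at 0, irrelevant here).\<close>
definition moebius_mu :: "nat \<Rightarrow> int" where
  "moebius_mu m = (if squarefree m then (-1) ^ card (prime_factors m) else 0)"

definition conj_classes :: "('a, 'b) monoid_scheme \<Rightarrow> 'a set set" where
  "conj_classes G = orbits G (carrier G) (\<lambda>g h. g \<otimes>\<^bsub>G\<^esub> h \<otimes>\<^bsub>G\<^esub> inv\<^bsub>G\<^esub> g)"

definition K_sub :: "('a, 'b) monoid_scheme \<Rightarrow> 'a set \<Rightarrow> nat \<Rightarrow> 'a set" where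
  "K_sub G H d = (THE K. subgroup K G \<and> H \<subseteq> K \<and> card (RCOSETS (G\<lparr>carrier := K\<rparr>) H) = d)"

definition n_classes_in :: "('a, 'b) monoid_scheme \<Rightarrow> 'a set \<Rightarrow> nat" where
  "n_classes_in G Y = card {Cl \<in> conj_classes G. Cl \<subseteq> Y}"

end

theory Submission
  imports Defs
begin

abbreviation mu :: "nat \<Rightarrow> real" where "mu k \<equiv> real_of_int (moebius_mu k)"

lemma moebius_prime_mult:
  assumes "Factorial_Ring.prime p" "\<not> p dvd s" "s > 0"
  shows "moebius_mu (p * s) = - moebius_mu s"
proof -
  have cop: "coprime p s" using assms by (simp add: prime_imp_coprime)
  have sq: "squarefree (p*s) \<longleftrightarrow> squarefree s"
    using squarefree_mult_coprime[OF cop] squarefree_prime[OF assms(1)] squarefree_multD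
    by blast
  have pf: "prime_factors (p*s) = insert p (prime_factors s)"
    using prime_factors_product[of p s] assms by (auto simp: prime_prime_factors)
  have "p \<notin> prime_factors s" using assms by auto
  then show ?thesis by (auto simp: moebius_mu_def sq pf)
qed

lemma moebius_sq: assumes "Factorial_Ring.prime p" "p^2 dvd d" shows "moebius_mu d = 0"
  using assms unfolding moebius_mu_def
  by (metis not_prime_unit not_squarefreeI)

lemma moebius_sum:
  assumes "m > 0"
  shows "(\<Sum>k | k dvd m. mu k) = (if m = 1 then 1 else 0)"
proof (cases "m = 1")
  case True
  then show ?thesis by (simp add: moebius_mu_def)
next
  case False
  then obtain p where p: "Factorial_Ring.prime p" "p dvd m" using assms prime_factor_nat by blast
  have fin: "finite {k. k dvd m}" using assms by simp
  have split: "(\<Sum>k | k dvd m. mu k) = (\<Sum>k | k dvd m \<and> \<not> p dvd k. mu k) + (\<Sum>k | k dvd m \<and> p dvd k. mu k)"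
  proof -
    have "(\<Sum>k | k dvd m. mu k) = (\<Sum>k \<in> {k. k dvd m \<and> \<not> p dvd k} \<union> {k. k dvd m \<and> p dvd k}. mu k)"
      by (intro sum.cong) auto
    also have "\<dots> = (\<Sum>k | k dvd m \<and> \<not> p dvd k. mu k) + (\<Sum>k | k dvd m \<and> p dvd k. mu k)"
      by (rule sum.union_disjoint) (use assms in auto)
    finally show ?thesis .
  qed
  have "(\<Sum>k | k dvd m \<and> p dvd k. mu k) = (\<Sum>k | k dvd m \<and> p dvd k \<and> \<not> p^2 dvd k. mu k)"
    by (rule sum.mono_neutral_right) (use assms p in \<open>auto simp: moebius_sq\<close>)
  also have "\<dots> = (\<Sum>s | s dvd m \<and> \<not> p dvd s. mu (p * s))"
  proof (rule sum.reindex_bij_witness[where i = "\<lambda>k. p * k" and j = "\<lambda>k. k div p"])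
    fix s assume s: "s \<in> {s. s dvd m \<and> \<not> p dvd s}"
    have cop: "coprime p s" using s p by (simp add: prime_imp_coprime)
    show "p * s div p = s" using p by (simp add: prime_gt_0_nat)
    show "p * s \<in> {k. k dvd m \<and> p dvd k \<and> \<not> p^2 dvd k}"
      using s p cop by (auto simp: power2_eq_square divides_mult)
  next
    fix k assume k: "k \<in> {k. k dvd m \<and> p dvd k \<and> \<not> p^2 dvd k}"
    then obtain s where ks: "k = p * s" by blast
    show "p * (k div p) = k" using ks p by (simp add: prime_gt_0_nat)
    show "k div p \<in> {s. s dvd m \<and> \<not> p dvd s}"
      using k ks p by (auto simp: power2_eq_square prime_gt_0_nat intro: dvd_mult_right)
  qed simp
  also have "\<dots> = - (\<Sum>s | s dvd m \<and> \<not> p dvd s. mu s)"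
    by (simp add: sum_negf[symmetric]) (intro sum.cong refl, use p assms in \<open>auto simp: moebius_prime_mult dvd_pos_nat\<close>)
  finally show ?thesis using split False by simp
qed

lemma dvd_reflect_sum:
  fixes f :: "nat \<Rightarrow> real"
  assumes "m > 0"
  shows "(\<Sum>k | k dvd m. f (m div k)) = (\<Sum>k | k dvd m. f k)"
  using assms by (intro sum.reindex_bij_witness[of _ "(div) m" "(div) m"]) (auto elim: dvdE)

lemma mu_interval_sum:
  assumes "g > 0" "g' dvd g"
  shows "(\<Sum>e | g' dvd e \<and> e dvd g. mu (e div g')) = (if g' = g then 1 else 0)"
proof -
  have g'0: "g' > 0" using assms by (auto intro: dvd_pos_nat)
  have "(\<Sum>e | g' dvd e \<and> e dvd g. mu (e div g')) = (\<Sum>k | k dvd g div g'. mu k)"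
    by (rule sum.reindex_bij_witness[where i = "\<lambda>k. g' * k" and j = "\<lambda>e. e div g'"])
       (use assms g'0 in \<open>auto elim!: dvdE simp: mult_dvd_mono\<close>)
  also have "\<dots> = (if g div g' = 1 then 1 else 0)"
    using assms by (intro moebius_sum) (auto elim: dvdE)
  also have "(g div g' = 1) = (g' = g)" using assms g'0
    by (metis div_self dvd_mult_div_cancel nat_mult_1_right less_irrefl)
  finally show ?thesis .
qed

lemma mu_interval_sum2:
  assumes "g > 0" "g' dvd g"
  shows "(\<Sum>e | g' dvd e \<and> e dvd g. mu (g div e)) = (if g' = g then 1 else 0)"
proof -
  have g'0: "g' > 0" using assms by (auto intro: dvd_pos_nat)
  have m0: "g div g' > 0" using assms by (auto elim: dvdE)
  have "(\<Sum>e | g' dvd e \<and> e dvd g. mu (g div e)) = (\<Sum>k | k dvd g div g'. mu ((g div g') div k))"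
    by (rule sum.reindex_bij_witness[where i = "\<lambda>k. g' * k" and j = "\<lambda>e. e div g'"])
       (use assms g'0 in \<open>auto elim!: dvdE simp: mult_dvd_mono\<close>)
  also have "\<dots> = (\<Sum>k | k dvd g div g'. mu k)"
    by (rule dvd_reflect_sum[OF m0])
  also have "\<dots> = (if g div g' = 1 then 1 else 0)"
    using m0 by (intro moebius_sum) auto
  also have "(g div g' = 1) = (g' = g)" using assms g'0
    by (metis div_self dvd_mult_div_cancel nat_mult_1_right less_irrefl)
  finally show ?thesis .
qed

lemma moebius_inv1:
  fixes f :: "nat \<Rightarrow> real"
  assumes "g > 0"
  shows "(\<Sum>e | e dvd g. \<Sum>g' | g' dvd e. mu (e div g') * f g') = f g"
proof -
  have fin: "finite {e. e dvd g}" using assms by simp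
  have "(\<Sum>e | e dvd g. \<Sum>g' | g' dvd e. mu (e div g') * f g')
      = (\<Sum>e \<in> {e. e dvd g}. \<Sum>g' \<in> {g'. g' \<in> {g'. g' dvd g} \<and> g' dvd e}. mu (e div g') * f g')"
    by (intro sum.cong refl) (auto intro: dvd_trans)
  also have "\<dots> = (\<Sum>g' \<in> {g'. g' dvd g}. \<Sum>e \<in> {e. e \<in> {e. e dvd g} \<and> g' dvd e}. mu (e div g') * f g')"
    by (rule sum.swap_restrict[OF fin fin])
  also have "\<dots> = (\<Sum>g' \<in> {g'. g' dvd g}. f g' * (\<Sum>e | g' dvd e \<and> e dvd g. mu (e div g')))"
    by (intro sum.cong refl) (auto simp: sum_distrib_left mult.commute intro!: sum.cong)
  also have "\<dots> = (\<Sum>g' \<in> {g'. g' dvd g}. if g' = g then f g else 0)"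
    by (intro sum.cong refl) (simp add: mu_interval_sum[OF assms])
  also have "\<dots> = f g" using fin by (simp add: sum.delta)
  finally show ?thesis .
qed

lemma moebius_inv2:
  fixes f :: "nat \<Rightarrow> real"
  assumes "g > 0"
  shows "(\<Sum>m | m dvd g. mu (g div m) * (\<Sum>e | e dvd m. f e)) = f g"
proof -
  have fin: "finite {e. e dvd g}" using assms by simp
  have "(\<Sum>m | m dvd g. mu (g div m) * (\<Sum>e | e dvd m. f e))
      = (\<Sum>m \<in> {m. m dvd g}. \<Sum>e \<in> {e. e \<in> {e. e dvd g} \<and> e dvd m}. mu (g div m) * f e)"
    by (intro sum.cong refl) (auto simp: sum_distrib_left intro: dvd_trans intro!: sum.cong)
  also have "\<dots> = (\<Sum>e \<in> {e. e dvd g}. \<Sum>m \<in> {m. m \<in> {m. m dvd g} \<and> e dvd m}. mu (g div m) * f e)"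
    by (rule sum.swap_restrict[OF fin fin])
  also have "\<dots> = (\<Sum>e \<in> {e. e dvd g}. f e * (\<Sum>m | e dvd m \<and> m dvd g. mu (g div m)))"
    by (intro sum.cong refl) (auto simp: sum_distrib_left mult.commute intro!: sum.cong)
  also have "\<dots> = (\<Sum>e \<in> {e. e dvd g}. if e = g then f g else 0)"
    by (intro sum.cong refl) (simp add: mu_interval_sum2[OF assms])
  also have "\<dots> = f g" using fin by (simp add: sum.delta)
  finally show ?thesis .
qed

definition PP :: "nat \<Rightarrow> (nat \<Rightarrow> real) \<Rightarrow> nat \<Rightarrow> nat \<Rightarrow> real" where
  "PP n p i j = p (gcd (gcd i j) n)"
definition Qs :: "nat \<Rightarrow> nat \<Rightarrow> nat set" where
  "Qs n d = {j \<in> {0<..n}. (n div d) dvd j}"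
definition rho :: "(nat \<Rightarrow> real) \<Rightarrow> nat \<Rightarrow> real" where
  "rho p e = (\<Sum>g | g dvd e. mu (e div g) * p g)"

lemma card_multiples:
  assumes "m > 0" "m dvd n"
  shows "card {i \<in> {0<..n}. m dvd i} = n div m"
proof -
  have "{i \<in> {0<..n}. m dvd i} = (\<lambda>k. m * k) ` {0<..n div m}"
  proof (intro equalityI subsetI)
    fix i assume "i \<in> {i \<in> {0<..n}. m dvd i}"
    then obtain k where "i = m * k" "0 < i" "i \<le> n" by auto
    then show "i \<in> (\<lambda>k. m * k) ` {0<..n div m}" using assms
      by (auto simp: image_iff intro!: exI[of _ k])
  next
    fix i assume "i \<in> (\<lambda>k. m * k) ` {0<..n div m}"
    then obtain k where k0: "k \<in> {0<..n div m}" and k: "i = m * k" by (rule imageE)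
    have "m * k \<le> m * (n div m)" using k0 by simp
    also have "\<dots> = n" using assms by simp
    finally show "i \<in> {i \<in> {0<..n}. m dvd i}" using assms k k0 by simp
  qed
  moreover have "inj_on (\<lambda>k. m * k) {0<..n div m}" using assms by (auto simp: inj_on_def)
  ultimately show ?thesis by (simp add: card_image)
qed

lemma p_expand:
  assumes "g > 0" shows "p g = (\<Sum>e | e dvd g. rho p e)"
  unfolding rho_def using moebius_inv1[OF assms, of p] by simp

lemma gcd_expand:
  assumes "g > 0" "g dvd n" "n > 0"
  shows "p g = (\<Sum>e | e dvd n. if e dvd g then rho p e else 0)"
proof -
  have "p g = (\<Sum>e \<in> {e \<in> {e. e dvd n}. e dvd g}. rho p e)"
    unfolding p_expand[OF assms(1)] using assms by (intro sum.cong) (auto intro: dvd_trans)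
  also have "\<dots> = (\<Sum>e | e dvd n. if e dvd g then rho p e else 0)"
    by (rule sum.inter_filter) (use assms in simp)
  finally show ?thesis .
qed

lemma PP_expand:
  assumes "n > 0"
  shows "PP n p i j = (\<Sum>e | e dvd n. if e dvd i \<and> e dvd j then rho p e else 0)"
  unfolding PP_def using assms by (subst gcd_expand[where n = n]) (auto intro!: sum.cong)

lemma F_expand:
  assumes "n > 0" "m dvd n"
  shows "(\<Sum>i\<in>{0<..n}. p (gcd i m)) = (\<Sum>e | e dvd m. rho p e * (real n / real e))"
proof -
  have m0: "m > 0" using assms by (auto intro: dvd_pos_nat)
  have "(\<Sum>i\<in>{0<..n}. p (gcd i m)) = (\<Sum>i\<in>{0<..n}. \<Sum>e | e dvd m. if e dvd i then rho p e else 0)"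
    using m0 by (intro sum.cong refl, subst gcd_expand[where n = m]) (auto intro!: sum.cong)
  also have "\<dots> = (\<Sum>e | e dvd m. \<Sum>i\<in>{0<..n}. if e dvd i then rho p e else 0)"
    by (rule sum.swap)
  also have "\<dots> = (\<Sum>e | e dvd m. rho p e * real (card {i \<in> {0<..n}. e dvd i}))"
    by (intro sum.cong refl) (simp add: sum.If_cases Int_def conj_commute)
  also have "\<dots> = (\<Sum>e | e dvd m. rho p e * (real n / real e))"
  proof (intro sum.cong refl)
    fix e assume "e \<in> {e. e dvd m}"
    then have e: "e dvd n" "e > 0" using assms m0 by (auto intro: dvd_trans dvd_pos_nat)
    have "card {i \<in> {0<..n}. e dvd i} = n div e" by (rule card_multiples) (use e in auto)
    then show "rho p e * real (card {i \<in> {0<..n}. e dvd i}) = rho p e * (real n / real e)"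
      using e by (simp only:) (simp add: real_of_nat_div)
  qed
  finally show ?thesis .
qed

lemma lcm_gcd_n:
  fixes n d e :: nat
  assumes "n > 0" "d dvd n" "e dvd n"
  shows "lcm (n div d) e * gcd (n div e) d = n"
proof -
  obtain a where a: "n = e * a" using assms by (auto elim: dvdE)
  obtain b where b: "n = d * b" using assms by (auto elim: dvdE)
  have "e * a > 0" "d * b > 0" using a b assms by auto
  then have e0: "e > 0" and d0: "d > 0" and a0: "a > 0" and b0: "b > 0" by auto
  have na: "n div e = a" using a e0 by simp
  have nb: "n div d = b" using b d0 by simp
  have g1: "e * gcd a d = gcd n (e * d)" using a by (simp add: gcd_mult_distrib_nat)
  have g2: "d * gcd b e = gcd n (e * d)" using b by (simp add: gcd_mult_distrib_nat mult.commute)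
  have l: "lcm b e * gcd b e = b * e" by (simp add: lcm_gcd_prod mult.commute)
  have gpos: "gcd b e > 0" using b0 by simp
  have "lcm b e * gcd a d * (e * gcd b e) = (lcm b e * gcd b e) * (e * gcd a d)" by (simp add: ac_simps)
  also have "\<dots> = b * e * (d * gcd b e)" using l g1 g2 by simp
  also have "\<dots> = n * (e * gcd b e)" using b by (simp add: ac_simps)
  finally have "lcm b e * gcd a d = n" using e0 gpos by simp
  then show ?thesis using na nb by simp
qed

lemma LHS_expand:
  assumes "n > 0" "d dvd n"
  shows "(\<Sum>i\<in>Qs n d. \<Sum>j\<in>Qs n d. PP n p i j)
       = (\<Sum>e | e dvd n. rho p e * (real (n div lcm (n div d) e))^2)"
proof -
  have fQ: "finite (Qs n d)" by (simp add: Qs_def)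
  have "(\<Sum>i\<in>Qs n d. \<Sum>j\<in>Qs n d. PP n p i j)
      = (\<Sum>i\<in>Qs n d. \<Sum>j\<in>Qs n d. \<Sum>e | e dvd n. if e dvd i \<and> e dvd j then rho p e else 0)"
    using assms by (simp add: PP_expand)
  also have "\<dots> = (\<Sum>e | e dvd n. \<Sum>i\<in>Qs n d. \<Sum>j\<in>Qs n d. if e dvd i \<and> e dvd j then rho p e else 0)"
    by (simp add: sum.swap[of _ "{e. e dvd n}"])
  also have "\<dots> = (\<Sum>e | e dvd n. rho p e * (real (n div lcm (n div d) e))^2)"
  proof (intro sum.cong refl)
    fix e assume e: "e \<in> {e. e dvd n}"
    let ?A = "{i \<in> Qs n d. e dvd i}"
    have "?A = {i \<in> {0<..n}. lcm (n div d) e dvd i}" by (auto simp: Qs_def)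
    moreover have "card {i \<in> {0<..n}. lcm (n div d) e dvd i} = n div lcm (n div d) e"
    proof (intro card_multiples)
      have nd: "n div d dvd n" "n div d > 0" using assms
        by (auto simp: dvd_div_iff_mult intro: dvd_pos_nat)
      have e0: "e > 0" using e assms by (auto intro: dvd_pos_nat)
      show "lcm (n div d) e > 0" using nd e0 by (simp add: lcm_pos_nat)
      show "lcm (n div d) e dvd n" using nd e by (auto intro: lcm_least)
    qed
    ultimately have cA: "card ?A = n div lcm (n div d) e" by simp
    have "(\<Sum>i\<in>Qs n d. \<Sum>j\<in>Qs n d. if e dvd i \<and> e dvd j then rho p e else 0)
        = (\<Sum>i\<in>Qs n d. if e dvd i then (\<Sum>j\<in>Qs n d. if e dvd j then rho p e else 0) else 0)"
      by (intro sum.cong refl) auto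
    also have "\<dots> = rho p e * (real (card ?A))^2"
      using fQ by (simp add: sum.If_cases Int_def conj_commute power2_eq_square)
    finally show "(\<Sum>i\<in>Qs n d. \<Sum>j\<in>Qs n d. if e dvd i \<and> e dvd j then rho p e else 0)
        = rho p e * (real (n div lcm (n div d) e))^2" using cA by simp
  qed
  finally show ?thesis .
qed

definition Fs :: "nat \<Rightarrow> (nat \<Rightarrow> real) \<Rightarrow> nat \<Rightarrow> real" where
  "Fs n p m = (\<Sum>i\<in>{0<..n}. p (gcd i m))"

lemma reindex_up:
  fixes h :: "nat \<Rightarrow> real"
  assumes "n > 0" "a dvd n"
  shows "(\<Sum>c | a dvd c \<and> c dvd n. h c) = (\<Sum>m | m dvd n div a. h (n div m))"
proof (rule sum.reindex_bij_witness[where i = "\<lambda>m. n div m" and j = "\<lambda>c. n div c"])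
  obtain k where k: "n = a * k" using assms by (auto elim: dvdE)
  have a0: "a > 0" "k > 0" using k assms by auto
  fix m assume m: "m \<in> {m. m dvd n div a}"
  then have mk: "m dvd k" using k a0 by simp
  then obtain l where l: "k = m * l" by (auto elim: dvdE)
  have m0: "m > 0" "l > 0" using l a0 by auto
  show "n div (n div m) = m" using k l m0 a0 by simp
  show "n div m \<in> {c. a dvd c \<and> c dvd n}" using k l m0 a0 by simp
next
  fix c assume c: "c \<in> {c. a dvd c \<and> c dvd n}"
  then obtain l where l: "c = a * l" by (auto elim: dvdE)
  obtain k where k: "n = c * k" using c by (auto elim: dvdE)
  have pos: "a > 0" "l > 0" "k > 0" using k l assms by auto
  show "n div (n div c) = c" using k pos by simp
  show "n div c \<in> {m. m dvd n div a}" using k l pos by simp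
next
  fix c assume c: "c \<in> {c. a dvd c \<and> c dvd n}"
  obtain k where k: "n = c * k" using c by (auto elim: dvdE)
  have pos: "c > 0" "k > 0" using k assms by auto
  show "h (n div (n div c)) = h c" using k pos by simp
qed

lemma reindex_flip:
  fixes h :: "nat \<Rightarrow> real"
  assumes "n > 0"
  shows "(\<Sum>a | a dvd n. h a) = (\<Sum>e | e dvd n. h (n div e))"
  using dvd_reflect_sum[OF assms, of h] by simp

lemma identity1:
  assumes n0: "n > 0" and dn: "d dvd n"
  shows "(\<Sum>i\<in>Qs n d. \<Sum>j\<in>Qs n d. PP n p i j) / real d
    = real n * (\<Sum>c | c dvd n. \<Sum>a | a dvd c.
         mu (c div a) * (real (gcd a d) / real (lcm a d)) * (Fs n p (n div c) / real n))"
proof -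
  define w where "w a = real (gcd a d) / real (lcm a d)" for a
  have fin: "finite {c. c dvd n}" using n0 by simp
  have "real n * (\<Sum>c | c dvd n. \<Sum>a | a dvd c.
         mu (c div a) * (real (gcd a d) / real (lcm a d)) * (Fs n p (n div c) / real n))
      = (\<Sum>c | c dvd n. \<Sum>a | a dvd c. mu (c div a) * w a * Fs n p (n div c))"
    using n0 by (simp add: sum_distrib_left w_def)
  also have "\<dots> = (\<Sum>c \<in> {c. c dvd n}. \<Sum>a \<in> {a. a \<in> {a. a dvd n} \<and> a dvd c}. mu (c div a) * w a * Fs n p (n div c))"
    by (intro sum.cong refl) (auto intro: dvd_trans)
  also have "\<dots> = (\<Sum>a \<in> {a. a dvd n}. \<Sum>c \<in> {c. c \<in> {c. c dvd n} \<and> a dvd c}. mu (c div a) * w a * Fs n p (n div c))"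
    by (rule sum.swap_restrict[OF fin fin])
  also have "\<dots> = (\<Sum>a | a dvd n. w a * (rho p (n div a) * real a))"
  proof (intro sum.cong refl)
    fix a assume a: "a \<in> {a. a dvd n}"
    obtain ka where ka: "n = a * ka" using a by (auto elim: dvdE)
    have a0: "a > 0" and ka0: "ka > 0" using ka n0 by auto
    have nak: "n div a = ka" using ka a0 by simp
    have na0: "n div a > 0" using nak ka0 by simp
    have "(\<Sum>c \<in> {c. c \<in> {c. c dvd n} \<and> a dvd c}. mu (c div a) * w a * Fs n p (n div c))
        = w a * (\<Sum>c | a dvd c \<and> c dvd n. mu (c div a) * Fs n p (n div c))"
      by (simp add: sum_distrib_left conj_commute ac_simps)
    also have "(\<Sum>c | a dvd c \<and> c dvd n. mu (c div a) * Fs n p (n div c))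
        = (\<Sum>m | m dvd n div a. mu (n div m div a) * Fs n p (n div (n div m)))"
      using n0 a by (intro reindex_up) auto
    also have "\<dots> = (\<Sum>m | m dvd n div a. mu (n div a div m) * (\<Sum>e | e dvd m. rho p e * (real n / real e)))"
    proof (intro sum.cong refl)
      fix m assume m: "m \<in> {m. m dvd n div a}"
      then have "m dvd ka" using nak by simp
      then have mn: "m dvd n" using ka by simp
      have m0: "m > 0" using dvd_pos_nat[OF na0] m by simp
      obtain k where k: "n = m * k" using mn by (auto elim: dvdE)
      have "n div (n div m) = m" using k m0 n0 by simp
      moreover have "n div m div a = n div a div m" by (simp add: div_mult2_eq[symmetric] mult.commute)
      ultimately show "mu (n div m div a) * Fs n p (n div (n div m))
          = mu (n div a div m) * (\<Sum>e | e dvd m. rho p e * (real n / real e))"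
        using F_expand[OF n0 mn, of p] by (simp add: Fs_def)
    qed
    also have "\<dots> = rho p (n div a) * (real n / real (n div a))"
      by (rule moebius_inv2[OF na0])
    also have "real n / real (n div a) = real a"
    proof -
      obtain k where k: "n = a * k" using a by (auto elim: dvdE)
      then have "k > 0" using n0 by simp
      then show ?thesis using k a0 by simp
    qed
    finally show "(\<Sum>c \<in> {c. c \<in> {c. c dvd n} \<and> a dvd c}. mu (c div a) * w a * Fs n p (n div c))
        = w a * (rho p (n div a) * real a)" .
  qed
  also have "\<dots> = (\<Sum>e | e dvd n. w (n div e) * (rho p (n div (n div e)) * real (n div e)))"
    by (rule reindex_flip[OF n0])
  also have "\<dots> = (\<Sum>e | e dvd n. rho p e * (real (n div lcm (n div d) e))^2 / real d)"
  proof (intro sum.cong refl)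
    fix e assume e: "e \<in> {e. e dvd n}"
    define a where "a = n div e"
    obtain k where k: "n = e * k" using e by (auto elim: dvdE)
    have e0: "e > 0" and k0: "k > 0" using k n0 by auto
    have nne: "n div (n div e) = e" using k e0 k0 by simp
    have a0: "a > 0" using k e0 k0 by (simp add: a_def)
    have d0: "d > 0" using dn n0 by (auto intro: dvd_pos_nat)
    have L: "lcm (n div d) e * gcd a d = n" unfolding a_def using lcm_gcd_n[OF n0 dn] e by simp
    have g0: "gcd a d > 0" using a0 by simp
    define l where "l = lcm (n div d) e"
    have L': "l * gcd a d = n" using L by (simp add: l_def)
    have lp: "l > 0" using L' n0 by (metis mult_0 neq0_conv)
    have "n div l = gcd a d" using lp by (simp flip: L')
    then have nl: "n div lcm (n div d) e = gcd a d" by (simp add: l_def)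
    have gln: "gcd a d * lcm a d = a * d" by (rule prod_gcd_lcm_nat[symmetric])
    have gl: "real (gcd a d) * real (lcm a d) = real a * real d"
      unfolding of_nat_mult[symmetric] gln by (rule refl)
    have lval: "real (lcm a d) = real a * real d / real (gcd a d)" using gl g0
      by (simp add: field_simps)
    have "w a * real a = (real (gcd a d))^2 / real d"
      unfolding w_def lval using a0 d0 g0 by (simp add: field_simps power2_eq_square)
    then have H: "w a * real a * rho p e = rho p e * (real (n div lcm (n div d) e))^2 / real d"
      using nl by simp
    have "w (n div e) * (rho p (n div (n div e)) * real (n div e)) = w a * real a * rho p e"
      using nne by (simp add: a_def[symmetric] ac_simps)
    then show "w (n div e) * (rho p (n div (n div e)) * real (n div e))
        = rho p e * (real (n div lcm (n div d) e))^2 / real d"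
      using H by simp
  qed
  also have "\<dots> = (\<Sum>i\<in>Qs n d. \<Sum>j\<in>Qs n d. PP n p i j) / real d"
    by (simp add: LHS_expand[OF n0 dn] sum_divide_distrib)
  finally show ?thesis ..
qed

lemma Sv_expand:
  assumes n0: "n > 0" and bn: "b dvd n"
  shows "(\<Sum>i\<in>{0<..n}. \<Sum>j\<in>Qs n b. PP n p i j) = (\<Sum>c | c dvd b. real (totient c) * Fs n p (n div c))"
proof -
  obtain kb where kb: "n = b * kb" using bn by (auto elim: dvdE)
  have b0: "b > 0" and kb0: "kb > 0" using kb n0 by auto
  have nb: "n div b = kb" using kb b0 by simp
  have fQ: "finite (Qs n b)" by (simp add: Qs_def)
  define T where "T = {g. n div b dvd g \<and> g dvd n}"
  have fT: "finite T" unfolding T_def using n0 by (auto intro: finite_subset[of _ "{g. g dvd n}"])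
  have "(\<Sum>i\<in>{0<..n}. \<Sum>j\<in>Qs n b. PP n p i j) = (\<Sum>j\<in>Qs n b. \<Sum>i\<in>{0<..n}. PP n p i j)"
    by (rule sum.swap)
  also have "\<dots> = (\<Sum>j\<in>Qs n b. Fs n p (gcd j n))"
    by (simp add: PP_def Fs_def gcd.assoc)
  also have "\<dots> = (\<Sum>g\<in>T. \<Sum>j\<in>{j. j \<in> Qs n b \<and> gcd j n = g}. Fs n p (gcd j n))"
  proof (rule sum.group[symmetric, OF fQ fT])
    show "(\<lambda>j. gcd j n) ` Qs n b \<subseteq> T"
    proof
      fix g assume "g \<in> (\<lambda>j. gcd j n) ` Qs n b"
      then obtain j where j: "j \<in> Qs n b" "g = gcd j n" by blast
      have "n div b dvd j" using j by (simp add: Qs_def)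
      moreover have "n div b dvd n" using kb nb by simp
      ultimately show "g \<in> T" using j by (simp add: T_def)
    qed
  qed
  also have "\<dots> = (\<Sum>g\<in>T. real (totient (n div g)) * Fs n p g)"
  proof (intro sum.cong refl)
    fix g assume g: "g \<in> T"
    have eq: "{j. j \<in> Qs n b \<and> gcd j n = g} = {k\<in>{0<..n}. gcd k n = g}"
      using g by (auto simp: Qs_def T_def intro: dvd_trans)
    have "card {k\<in>{0<..n}. gcd k n = g} = totient (n div g)"
      using g n0 by (intro card_gcd_eq_totient) (auto simp: T_def)
    then show "(\<Sum>j\<in>{j. j \<in> Qs n b \<and> gcd j n = g}. Fs n p (gcd j n)) = real (totient (n div g)) * Fs n p g"
      unfolding eq by simp
  qed
  also have "\<dots> = (\<Sum>m | m dvd n div (n div b). real (totient (n div (n div m))) * Fs n p (n div m))"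
    unfolding T_def by (rule reindex_up[OF n0]) (simp add: kb nb)
  also have "\<dots> = (\<Sum>c | c dvd b. real (totient c) * Fs n p (n div c))"
  proof -
    have nnb: "n div (n div b) = b" using nb kb kb0 by simp
    show ?thesis unfolding nnb
    proof (intro sum.cong refl)
      fix m assume "m \<in> {m. m dvd b}"
      then obtain l where l: "b = m * l" by (auto elim: dvdE)
      then have "m > 0" "l > 0" using b0 by auto
      then have "n div (n div m) = m" using kb l kb0 by simp
      then show "real (totient (n div (n div m))) * Fs n p (n div m) = real (totient m) * Fs n p (n div m)"
        by simp
    qed
  qed
  finally show ?thesis .
qed

lemma phiT:
  assumes n0: "n > 0" and cn: "c dvd n"
  shows "(\<Sum>b | b dvd c. mu (c div b) * ((\<Sum>i\<in>{0<..n}. \<Sum>j\<in>Qs n b. PP n p i j) / real n))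
       = real (totient c) * (Fs n p (n div c) / real n)"
proof -
  have c0: "c > 0" using cn n0 by (auto intro: dvd_pos_nat)
  have "(\<Sum>b | b dvd c. mu (c div b) * ((\<Sum>i\<in>{0<..n}. \<Sum>j\<in>Qs n b. PP n p i j) / real n))
      = (\<Sum>b | b dvd c. mu (c div b) * (\<Sum>c' | c' dvd b. real (totient c') * (Fs n p (n div c') / real n)))"
  proof (intro sum.cong refl)
    fix b assume "b \<in> {b. b dvd c}"
    then have "b dvd n" using cn by (auto intro: dvd_trans)
    then show "mu (c div b) * ((\<Sum>i\<in>{0<..n}. \<Sum>j\<in>Qs n b. PP n p i j) / real n)
      = mu (c div b) * (\<Sum>c' | c' dvd b. real (totient c') * (Fs n p (n div c') / real n))"
      by (simp add: Sv_expand[OF n0] sum_divide_distrib)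
  qed
  also have "\<dots> = real (totient c) * (Fs n p (n div c) / real n)"
    by (rule moebius_inv2[OF c0, of "\<lambda>c'. real (totient c') * (Fs n p (n div c') / real n)"])
  finally show ?thesis .
qed

lemma sum_factor_aux:
  fixes x t z :: real
  shows "(\<Sum>b\<in>B. x * y b / t * z * s b) = x / t * z * (\<Sum>b\<in>B. y b * s b)"
  by (simp add: sum_distrib_left ac_simps)

lemma identity2:
  assumes n0: "n > 0" and dn: "d dvd n"
  shows "(\<Sum>i\<in>Qs n d. \<Sum>j\<in>Qs n d. PP n p i j) / real d
    = real n * (\<Sum>c | c dvd n. \<Sum>a | a dvd c. \<Sum>b | b dvd c.
         mu (c div a) * mu (c div b) / real (totient c) * (real (gcd a d) / real (lcm a d))
         * ((\<Sum>i\<in>{0<..n}. \<Sum>j\<in>Qs n b. PP n p i j) / real n))"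
proof -
  have "(\<Sum>c | c dvd n. \<Sum>a | a dvd c. \<Sum>b | b dvd c.
         mu (c div a) * mu (c div b) / real (totient c) * (real (gcd a d) / real (lcm a d))
         * ((\<Sum>i\<in>{0<..n}. \<Sum>j\<in>Qs n b. PP n p i j) / real n))
     = (\<Sum>c | c dvd n. \<Sum>a | a dvd c.
         mu (c div a) * (real (gcd a d) / real (lcm a d)) * (Fs n p (n div c) / real n))"
  proof (intro sum.cong refl)
    fix c a assume c: "c \<in> {c. c dvd n}"
    have c0: "c > 0" using c n0 by (auto intro: dvd_pos_nat)
    have t0: "real (totient c) > 0" using c0 by simp
    have "(\<Sum>b | b dvd c. mu (c div a) * mu (c div b) / real (totient c) * (real (gcd a d) / real (lcm a d))
         * ((\<Sum>i\<in>{0<..n}. \<Sum>j\<in>Qs n b. PP n p i j) / real n))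
       = mu (c div a) / real (totient c) * (real (gcd a d) / real (lcm a d)) *
         (\<Sum>b | b dvd c. mu (c div b) * ((\<Sum>i\<in>{0<..n}. \<Sum>j\<in>Qs n b. PP n p i j) / real n))"
      by (rule sum_factor_aux)
    also have "\<dots> = mu (c div a) * (real (gcd a d) / real (lcm a d)) * (Fs n p (n div c) / real n)"
      using t0 unfolding phiT[OF n0 c[simplified]] by simp
    finally show "(\<Sum>b | b dvd c. mu (c div a) * mu (c div b) / real (totient c) * (real (gcd a d) / real (lcm a d))
         * ((\<Sum>i\<in>{0<..n}. \<Sum>j\<in>Qs n b. PP n p i j) / real n))
       = mu (c div a) * (real (gcd a d) / real (lcm a d)) * (Fs n p (n div c) / real n)" .
  qed
  then show ?thesis using identity1[OF n0 dn, of p] by simp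
qed


definition CP :: "('a, 'b) monoid_scheme \<Rightarrow> 'a set \<Rightarrow> 'a set \<Rightarrow> nat" where
  "CP K A B = card {(x, y). x \<in> A \<and> y \<in> B \<and> x \<otimes>\<^bsub>K\<^esub> y = y \<otimes>\<^bsub>K\<^esub> x}"

lemma CP_sum:
  assumes "finite A" "finite B"
  shows "CP K A B = (\<Sum>y\<in>B. card {x \<in> A. x \<otimes>\<^bsub>K\<^esub> y = y \<otimes>\<^bsub>K\<^esub> x})"
proof -
  have "{(x, y). x \<in> A \<and> y \<in> B \<and> x \<otimes>\<^bsub>K\<^esub> y = y \<otimes>\<^bsub>K\<^esub> x}
      = (\<lambda>(y, x). (x, y)) ` (SIGMA y:B. {x \<in> A. x \<otimes>\<^bsub>K\<^esub> y = y \<otimes>\<^bsub>K\<^esub> x})"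
    by auto
  moreover have "inj_on (\<lambda>(y, x). (x, y)) (SIGMA y:B. {x \<in> A. x \<otimes>\<^bsub>K\<^esub> y = y \<otimes>\<^bsub>K\<^esub> x})"
    by (auto simp: inj_on_def)
  ultimately have "CP K A B = card (SIGMA y:B. {x \<in> A. x \<otimes>\<^bsub>K\<^esub> y = y \<otimes>\<^bsub>K\<^esub> x})"
    unfolding CP_def by (simp add: card_image)
  also have "\<dots> = (\<Sum>y\<in>B. card {x \<in> A. x \<otimes>\<^bsub>K\<^esub> y = y \<otimes>\<^bsub>K\<^esub> x})"
    using assms by (intro card_SigmaI) auto
  finally show ?thesis .
qed

lemma class_count:
  fixes K :: "('a, 'b) monoid_scheme" (structure)
  assumes grp: "group K" and fin: "finite (carrier K)" and Ysub: "Y \<subseteq> carrier K"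
    and inv: "\<And>g y. g \<in> carrier K \<Longrightarrow> y \<in> Y \<Longrightarrow> g \<otimes>\<^bsub>K\<^esub> y \<otimes>\<^bsub>K\<^esub> inv\<^bsub>K\<^esub> g \<in> Y"
  shows "real (card {Cl \<in> conj_classes K. Cl \<subseteq> Y}) * real (order K) = real (CP K (carrier K) Y)"
proof -
  interpret group K by (rule grp)
  define \<phi> where "\<phi> = (\<lambda>g. \<lambda>h\<in>carrier K. g \<otimes> h \<otimes> inv g)"
  interpret A: group_action K "carrier K" \<phi> unfolding \<phi>_def by (rule action_by_conjugation)
  have finY: "finite Y" using fin Ysub finite_subset by blast
  have orb_eq: "orbit K (\<lambda>g h. g \<otimes> h \<otimes> inv g) y = orbit K \<phi> y" if "y \<in> carrier K" for y
    using that by (auto simp: orbit_def \<phi>_def)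
  define Orb where "Orb = orbits K Y \<phi>"
  have sel: "{Cl \<in> conj_classes K. Cl \<subseteq> Y} = Orb"
  proof (intro equalityI subsetI)
    fix Cl assume "Cl \<in> {Cl \<in> conj_classes K. Cl \<subseteq> Y}"
    then obtain x where x: "x \<in> carrier K" "Cl = orbit K \<phi> x" "Cl \<subseteq> Y"
      by (auto simp: conj_classes_def orbits_def orb_eq)
    then have "x \<in> Y" using A.orbit_refl by blast
    then show "Cl \<in> Orb" using x by (auto simp: Orb_def orbits_def)
  next
    fix Cl assume "Cl \<in> Orb"
    then obtain y where y: "y \<in> Y" "Cl = orbit K \<phi> y" by (auto simp: Orb_def orbits_def)
    have "Cl \<subseteq> Y" using y Ysub inv by (auto simp: orbit_def \<phi>_def)
    moreover have "Cl \<in> conj_classes K" using y Ysub orb_eq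
      by (auto simp: conj_classes_def orbits_def)
    ultimately show "Cl \<in> {Cl \<in> conj_classes K. Cl \<subseteq> Y}" by simp
  qed
  have Osub: "Orb \<subseteq> orbits K (carrier K) \<phi>" using Ysub by (auto simp: Orb_def orbits_def)
  have finO: "finite Orb" unfolding Orb_def orbits_def using finY by simp
  have UO: "\<Union>Orb = Y"
  proof (intro equalityI subsetI)
    fix z assume "z \<in> \<Union>Orb"
    then obtain y where "y \<in> Y" "z \<in> orbit K \<phi> y" by (auto simp: Orb_def orbits_def)
    then show "z \<in> Y" using Ysub inv by (auto simp: orbit_def \<phi>_def)
  next
    fix z assume "z \<in> Y"
    then show "z \<in> \<Union>Orb" using Ysub A.orbit_refl by (auto simp: Orb_def orbits_def)
  qed
  have orb_same: "orbit K \<phi> y = Cl" if "Cl \<in> Orb" "y \<in> Cl" for Cl y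
  proof -
    have yY: "y \<in> Y" using that UO by blast
    have "orbit K \<phi> y \<in> orbits K (carrier K) \<phi>" using yY Ysub by (auto simp: orbits_def)
    moreover have "y \<in> orbit K \<phi> y" using yY Ysub A.orbit_refl by blast
    ultimately show ?thesis using A.disjoint_union[of "orbit K \<phi> y" Cl] that Osub by blast
  qed
  have finCl: "finite Cl" if "Cl \<in> Orb" for Cl using that UO finY by (meson Union_upper finite_subset)
  have "real (card Orb) = (\<Sum>Cl\<in>Orb. \<Sum>y\<in>Cl. 1 / real (card Cl))"
  proof -
    have "(\<Sum>y\<in>Cl. 1 / real (card Cl)) = 1" if "Cl \<in> Orb" for Cl
    proof -
      have "Cl \<noteq> {}" using that A.orbit_refl Ysub by (auto simp: Orb_def orbits_def)
      then have "card Cl > 0" using finCl[OF that] by (simp add: card_gt_0_iff)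
      then show ?thesis by simp
    qed
    then show ?thesis by simp
  qed
  also have "\<dots> = (\<Sum>Cl\<in>Orb. \<Sum>y\<in>Cl. 1 / real (card (orbit K \<phi> y)))"
    by (intro sum.cong refl) (simp add: orb_same)
  also have "\<dots> = (\<Sum>y\<in>\<Union>Orb. 1 / real (card (orbit K \<phi> y)))"
  proof -
    have "(\<Sum>y\<in>\<Union>Orb. 1 / real (card (orbit K \<phi> y))) = ((sum \<circ> sum) (\<lambda>y. 1 / real (card (orbit K \<phi> y)))) Orb"
    proof (rule sum.Union_disjoint)
      show "\<forall>A\<in>Orb. finite A" using finCl by blast
      show "\<forall>A\<in>Orb. \<forall>B\<in>Orb. A \<noteq> B \<longrightarrow> A \<inter> B = {}"
      proof (intro ballI impI)
        fix A B assume "A \<in> Orb" "B \<in> Orb" "A \<noteq> B"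
        then show "A \<inter> B = {}" using A.disjoint_union[of A B] Osub by auto
      qed
    qed
    then show ?thesis by simp
  qed
  finally have cO: "real (card Orb) = (\<Sum>y\<in>Y. 1 / real (card (orbit K \<phi> y)))" using UO by simp
  have "real (card Orb) * real (order K) = (\<Sum>y\<in>Y. real (order K) / real (card (orbit K \<phi> y)))"
    unfolding cO by (simp add: sum_distrib_right)
  also have "\<dots> = (\<Sum>y\<in>Y. real (card (stabilizer K \<phi> y)))"
  proof (intro sum.cong refl)
    fix y assume "y \<in> Y"
    then have yK: "y \<in> carrier K" using Ysub by blast
    have os: "card (orbit K \<phi> y) * card (stabilizer K \<phi> y) = order K"
      by (rule A.orbit_stabilizer_theorem[OF yK])
    have "orbit K \<phi> y \<subseteq> Y" using \<open>y \<in> Y\<close> Ysub inv by (auto simp: orbit_def \<phi>_def)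
    then have "finite (orbit K \<phi> y)" using finY finite_subset by blast
    moreover have "y \<in> orbit K \<phi> y" by (rule A.orbit_refl[OF yK])
    ultimately have "card (orbit K \<phi> y) > 0" by (auto simp: card_gt_0_iff)
    then show "real (order K) / real (card (orbit K \<phi> y)) = real (card (stabilizer K \<phi> y))"
      by (simp add: os[symmetric])
  qed
  also have "\<dots> = (\<Sum>y\<in>Y. real (card {x \<in> carrier K. x \<otimes> y = y \<otimes> x}))"
  proof (intro sum.cong refl arg_cong[where f = "\<lambda>A. real (card A)"])
    fix y assume "y \<in> Y"
    then have yK: "y \<in> carrier K" using Ysub by blast
    show "stabilizer K \<phi> y = {x \<in> carrier K. x \<otimes> y = y \<otimes> x}"
    proof (intro equalityI subsetI)
      fix x assume "x \<in> stabilizer K \<phi> y"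
      then have x: "x \<in> carrier K" "x \<otimes> y \<otimes> inv x = y" by (auto simp: stabilizer_def \<phi>_def yK)
      have "x \<otimes> y = x \<otimes> y \<otimes> inv x \<otimes> x" using x(1) yK by (simp add: m_assoc)
      then have "x \<otimes> y = y \<otimes> x" using x(2) by simp
      then show "x \<in> {x \<in> carrier K. x \<otimes> y = y \<otimes> x}" using x by simp
    next
      fix x assume "x \<in> {x \<in> carrier K. x \<otimes> y = y \<otimes> x}"
      then have x: "x \<in> carrier K" "x \<otimes> y = y \<otimes> x" by auto
      then have "x \<otimes> y \<otimes> inv x = y" using yK by (simp add: m_assoc)
      then show "x \<in> stabilizer K \<phi> y" using x yK by (simp add: stabilizer_def \<phi>_def)
    qed
  qed
  also have "\<dots> = real (CP K (carrier K) Y)"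
    using fin finY by (simp add: CP_sum)
  finally show ?thesis using sel by simp
qed

lemma euclid_inv:
  fixes f :: "nat \<Rightarrow> nat \<Rightarrow> 'c"
  assumes sym: "\<And>i j. f i j = f j i" and add: "\<And>i j. f (i + j) j = f i j"
    and per: "\<And>i j. f (i + n) j = f i j"
  shows "f i j = f (gcd (gcd i j) n) 0"
proof -
  have mult: "f (r + j * k) j = f r j" for r j k
  proof (induction k)
    case (Suc k)
    have "f (r + j * Suc k) j = f ((r + j * k) + j) j" by (simp add: ac_simps)
    also have "\<dots> = f (r + j * k) j" by (rule add)
    finally show ?case using Suc by simp
  qed simp
  have modr: "f i j = f (i mod j) j" for i j
    using mult[of "i mod j" j "i div j"] by simp
  have red: "f i j = f (gcd i j) 0" for i j
  proof (induction j arbitrary: i rule: less_induct)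
    case (less j)
    show ?case
    proof (cases "j = 0")
      case True then show ?thesis by simp
    next
      case False
      have "f i j = f (i mod j) j" by (rule modr)
      also have "\<dots> = f j (i mod j)" by (rule sym)
      also have "\<dots> = f (gcd j (i mod j)) 0" by (rule less.IH) (use False in simp)
      also have "gcd j (i mod j) = gcd i j" using False by (metis gcd.commute gcd_red_nat)
      finally show ?thesis .
    qed
  qed
  have "f i j = f (gcd i j) 0" by (rule red)
  also have "\<dots> = f 0 (gcd i j)" by (rule sym)
  also have "\<dots> = f (0 + n) (gcd i j)" by (rule per[symmetric])
  also have "\<dots> = f (gcd n (gcd i j)) 0" using red[of n "gcd i j"] by simp
  finally show ?thesis by (simp add: gcd.commute)
qed

lemma CP_UN_left:
  assumes "finite I" "\<And>i. i \<in> I \<Longrightarrow> finite (A i)" "finite B"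
    and "\<And>i i'. i \<in> I \<Longrightarrow> i' \<in> I \<Longrightarrow> i \<noteq> i' \<Longrightarrow> A i \<inter> A i' = {}"
  shows "CP K (\<Union>i\<in>I. A i) B = (\<Sum>i\<in>I. CP K (A i) B)"
proof -
  have "{(x, y). x \<in> (\<Union>i\<in>I. A i) \<and> y \<in> B \<and> x \<otimes>\<^bsub>K\<^esub> y = y \<otimes>\<^bsub>K\<^esub> x}
      = (\<Union>i\<in>I. {(x, y). x \<in> A i \<and> y \<in> B \<and> x \<otimes>\<^bsub>K\<^esub> y = y \<otimes>\<^bsub>K\<^esub> x})" by auto
  moreover have "card (\<Union>i\<in>I. {(x, y). x \<in> A i \<and> y \<in> B \<and> x \<otimes>\<^bsub>K\<^esub> y = y \<otimes>\<^bsub>K\<^esub> x})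
      = (\<Sum>i\<in>I. card {(x, y). x \<in> A i \<and> y \<in> B \<and> x \<otimes>\<^bsub>K\<^esub> y = y \<otimes>\<^bsub>K\<^esub> x})"
  proof (rule card_UN_disjoint)
    show "finite I" by fact
    show "\<forall>i\<in>I. finite {(x, y). x \<in> A i \<and> y \<in> B \<and> x \<otimes>\<^bsub>K\<^esub> y = y \<otimes>\<^bsub>K\<^esub> x}"
    proof
      fix i assume "i \<in> I"
      then have "finite (A i \<times> B)" using assms by simp
      then show "finite {(x, y). x \<in> A i \<and> y \<in> B \<and> x \<otimes>\<^bsub>K\<^esub> y = y \<otimes>\<^bsub>K\<^esub> x}"
        by (rule finite_subset[rotated]) auto
    qed
    show "\<forall>i\<in>I. \<forall>j\<in>I. i \<noteq> j \<longrightarrow> {(x, y). x \<in> A i \<and> y \<in> B \<and> x \<otimes>\<^bsub>K\<^esub> y = y \<otimes>\<^bsub>K\<^esub> x} \<inter> {(x, y). x \<in> A j \<and> y \<in> B \<and> x \<otimes>\<^bsub>K\<^esub> y = y \<otimes>\<^bsub>K\<^esub> x} = {}"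
      using assms(4) by blast
  qed
  ultimately show ?thesis by (simp add: CP_def)
qed

lemma CP_UN_right:
  assumes "finite I" "\<And>i. i \<in> I \<Longrightarrow> finite (B i)" "finite A"
    and "\<And>i i'. i \<in> I \<Longrightarrow> i' \<in> I \<Longrightarrow> i \<noteq> i' \<Longrightarrow> B i \<inter> B i' = {}"
  shows "CP K A (\<Union>i\<in>I. B i) = (\<Sum>i\<in>I. CP K A (B i))"
proof -
  have "{(x, y). x \<in> A \<and> y \<in> (\<Union>i\<in>I. B i) \<and> x \<otimes>\<^bsub>K\<^esub> y = y \<otimes>\<^bsub>K\<^esub> x}
      = (\<Union>i\<in>I. {(x, y). x \<in> A \<and> y \<in> B i \<and> x \<otimes>\<^bsub>K\<^esub> y = y \<otimes>\<^bsub>K\<^esub> x})" by auto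
  moreover have "card (\<Union>i\<in>I. {(x, y). x \<in> A \<and> y \<in> B i \<and> x \<otimes>\<^bsub>K\<^esub> y = y \<otimes>\<^bsub>K\<^esub> x})
      = (\<Sum>i\<in>I. card {(x, y). x \<in> A \<and> y \<in> B i \<and> x \<otimes>\<^bsub>K\<^esub> y = y \<otimes>\<^bsub>K\<^esub> x})"
  proof (rule card_UN_disjoint)
    show "finite I" by fact
    show "\<forall>i\<in>I. finite {(x, y). x \<in> A \<and> y \<in> B i \<and> x \<otimes>\<^bsub>K\<^esub> y = y \<otimes>\<^bsub>K\<^esub> x}"
    proof
      fix i assume "i \<in> I"
      then have "finite (A \<times> B i)" using assms by simp
      then show "finite {(x, y). x \<in> A \<and> y \<in> B i \<and> x \<otimes>\<^bsub>K\<^esub> y = y \<otimes>\<^bsub>K\<^esub> x}"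
        by (rule finite_subset[rotated]) auto
    qed
    show "\<forall>i\<in>I. \<forall>j\<in>I. i \<noteq> j \<longrightarrow> {(x, y). x \<in> A \<and> y \<in> B i \<and> x \<otimes>\<^bsub>K\<^esub> y = y \<otimes>\<^bsub>K\<^esub> x} \<inter> {(x, y). x \<in> A \<and> y \<in> B j \<and> x \<otimes>\<^bsub>K\<^esub> y = y \<otimes>\<^bsub>K\<^esub> x} = {}"
      using assms(4) by blast
  qed
  ultimately show ?thesis by (simp add: CP_def)
qed

lemma class_count_all:
  fixes K :: "('a, 'b) monoid_scheme" (structure)
  assumes grp: "group K" and fin: "finite (carrier K)"
  shows "real (card (conj_classes K)) * real (order K) = real (CP K (carrier K) (carrier K))"
proof -
  have inv: "g \<otimes> y \<otimes> inv g \<in> carrier K" if "g \<in> carrier K" "y \<in> carrier K" for g y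
    using that grp by (simp add: group.inv_closed monoid.m_closed group.is_monoid)
  have all: "{Cl \<in> conj_classes K. Cl \<subseteq> carrier K} = conj_classes K"
  proof -
    have "Cl \<subseteq> carrier K" if Cl: "Cl \<in> conj_classes K" for Cl
    proof -
      obtain x where x: "x \<in> carrier K" "Cl = orbit K (\<lambda>g h. g \<otimes> h \<otimes> inv g) x"
        using Cl unfolding conj_classes_def orbits_def by blast
      show ?thesis unfolding x(2) orbit_def using inv x(1) by blast
    qed
    then show ?thesis by blast
  qed
  show ?thesis using class_count[OF grp fin subset_refl inv] unfolding all .
qed


lemma dvd_div_iff_aux:
  fixes n d i :: nat
  assumes "n > 0" "d dvd n"
  shows "n dvd i * d \<longleftrightarrow> n div d dvd i"
proof -
  obtain b where b: "n = d * b" using assms by (auto elim: dvdE)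
  have d0: "d > 0" using b assms by auto
  have "n div d = b" using b d0 by simp
  moreover have "d * b dvd i * d \<longleftrightarrow> b dvd i" using d0 by (simp add: mult.commute)
  ultimately show ?thesis using b by simp
qed


locale cq = normal H G for H and G (structure) +
  fixes n :: nat and t
  assumes finG: "finite (carrier G)"
    and ordQ: "order (G Mod H) = n"
    and t_in: "t \<in> carrier (G Mod H)"
    and t_gen: "carrier (G Mod H) = range (\<lambda>k::int. t [^]\<^bsub>G Mod H\<^esub> k)"

sublocale cq \<subseteq> Q: comm_group "G Mod H"
proof -
  have g: "group (G Mod H)" by (rule factorgroup_is_group)
  have "cyclic_group (G Mod H)" using group.cyclic_group[OF g] t_in t_gen by blast
  then show "comm_group (G Mod H)" by (rule group.cyclic_imp_abelian_group[OF g])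
qed

context cq
begin

definition e :: "nat \<Rightarrow> 'a set" where "e k = t [^]\<^bsub>G Mod H\<^esub> k"
definition Cs :: "nat \<Rightarrow> 'a set" where "Cs k = {x \<in> carrier G. H #> x = e k}"
definition P :: "nat \<Rightarrow> nat \<Rightarrow> nat" where "P i j = CP G (Cs i) (Cs j)"

lemma finQ: "finite (carrier (G Mod H))"
  unfolding carrier_FactGroup using finG by simp

lemma n_pos: "n > 0"
  using ordQ finQ Q.one_closed unfolding order_def by (auto simp: card_gt_0_iff)

lemma t_pow_n: "t [^]\<^bsub>G Mod H\<^esub> n = \<one>\<^bsub>G Mod H\<^esub>"
  using Q.pow_order_eq_1[OF t_in] ordQ by simp

lemma e_in: "e k \<in> carrier (G Mod H)"
  unfolding e_def using t_in by simp

lemma e_add: "e i \<otimes>\<^bsub>G Mod H\<^esub> e j = e (i + j)"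
  unfolding e_def using t_in by (simp add: Q.nat_pow_mult del: mult_FactGroup)

lemma e_mod: "e k = e (k mod n)"
proof -
  have "e k = e (k mod n + n * (k div n))" by simp
  also have "\<dots> = e (k mod n) \<otimes>\<^bsub>G Mod H\<^esub> (t [^]\<^bsub>G Mod H\<^esub> n) [^]\<^bsub>G Mod H\<^esub> (k div n)"
    unfolding e_def using t_in by (simp add: Q.nat_pow_mult Q.nat_pow_pow del: mult_FactGroup)
  also have "\<dots> = e (k mod n)" using t_pow_n e_in by (simp del: mult_FactGroup one_FactGroup)
  finally show ?thesis .
qed

lemma e_n: "e n = e 0"
  using e_mod[of n] by simp

lemma ord_t_dvd: "Q.ord t dvd n"
  using Q.pow_eq_id[OF t_in] t_pow_n by simp

lemma carrierQ: "carrier (G Mod H) = e ` {0<..n}"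
proof (intro equalityI subsetI)
  fix q assume "q \<in> carrier (G Mod H)"
  then obtain k :: int where k: "q = t [^]\<^bsub>G Mod H\<^esub> k" using t_gen by blast
  define m where "m = nat (k mod int n)"
  have "int m = k mod int n" using n_pos by (simp add: m_def)
  have "int (Q.ord t) dvd int n" using ord_t_dvd by simp
  moreover have "int n dvd (int m - k)" using \<open>int m = k mod int n\<close>
    by (simp add: mod_eq_dvd_iff dvd_diff_commute)
  ultimately have "int (Q.ord t) dvd (int m - k)" by (rule dvd_trans)
  then have "t [^]\<^bsub>G Mod H\<^esub> k = t [^]\<^bsub>G Mod H\<^esub> (int m)" using Q.int_pow_eq[OF t_in] by blast
  then have q: "q = e m" using k by (simp add: e_def int_pow_int)
  have "k mod int n < int n" using n_pos by simp
  then have "m < n" using \<open>int m = k mod int n\<close> by linarith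
  show "q \<in> e ` {0<..n}"
  proof (cases "m = 0")
    case True
    then have "q = e n" using q e_n by simp
    moreover have "n \<in> {0<..n}" using n_pos by simp
    ultimately show ?thesis by (rule image_eqI)
  next
    case False
    then have "m \<in> {0<..n}" using \<open>m < n\<close> by simp
    then show ?thesis using q by (rule rev_image_eqI)
  qed
qed (auto simp: e_in)

lemma e_inj: "inj_on e {0<..n}"
proof (rule eq_card_imp_inj_on)
  show "finite {0<..n}" by simp
  show "card (e ` {0<..n}) = card {0<..n}"
    using ordQ unfolding order_def carrierQ by simp
qed

lemma ord_t: "Q.ord t = n"
proof -
  have o1: "Q.ord t \<ge> 1" using Q.ord_ge_1[OF finQ t_in] .
  have o2: "Q.ord t \<le> n" using Q.ord_le_group_order[OF finQ t_in] ordQ by simp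
  have "e (Q.ord t) = e n" using t_in t_pow_n by (simp add: e_def)
  moreover have "Q.ord t \<in> {0<..n}" "n \<in> {0<..n}" using o1 o2 n_pos by auto
  ultimately show ?thesis using inj_onD[OF e_inj] by blast
qed

lemma e_eq_one: "e k = \<one>\<^bsub>G Mod H\<^esub> \<longleftrightarrow> n dvd k"
  unfolding e_def using Q.pow_eq_id[OF t_in] ord_t by simp

lemma pi_hom: "group_hom G (G Mod H) (\<lambda>a. H #> a)"
  using r_coset_hom_Mod factorgroup_is_group is_group
  by (simp add: group_hom_def group_hom_axioms_def)

lemma pi_in: "x \<in> carrier G \<Longrightarrow> H #> x \<in> carrier (G Mod H)"
  using group_hom.hom_closed[OF pi_hom] by blast

lemma pi_mult: "x \<in> carrier G \<Longrightarrow> y \<in> carrier G \<Longrightarrow> H #> (x \<otimes> y) = (H #> x) \<otimes>\<^bsub>G Mod H\<^esub> (H #> y)"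
  using group_hom.hom_mult[OF pi_hom] by blast

lemma pi_inv: "x \<in> carrier G \<Longrightarrow> H #> (inv x) = inv\<^bsub>G Mod H\<^esub> (H #> x)"
  using group_hom.hom_inv[OF pi_hom] by blast

lemma coset_char:
  assumes "R \<in> carrier (G Mod H)"
  shows "{x \<in> carrier G. H #> x = R} = R"
proof -
  obtain a where a: "a \<in> carrier G" "R = H #> a" using assms unfolding carrier_FactGroup by blast
  show ?thesis
  proof (intro equalityI subsetI)
    fix x assume "x \<in> {x \<in> carrier G. H #> x = R}"
    then show "x \<in> R" using rcos_self[OF _ subgroup_axioms] by blast
  next
    fix x assume x: "x \<in> R"
    then have xG: "x \<in> carrier G" using a r_coset_subset_G[OF subset a(1)] by blast
    have "H #> a = H #> x" using repr_independence[OF _ a(1) subgroup_axioms] x a by blast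
    then show "x \<in> {x \<in> carrier G. H #> x = R}" using xG a by simp
  qed
qed

lemma Cs_eq: "Cs k = e k"
  unfolding Cs_def using coset_char[OF e_in] .

lemma Cs_sub: "Cs k \<subseteq> carrier G"
  unfolding Cs_def by blast

lemma Cs_fin: "finite (Cs k)"
  using Cs_sub finG finite_subset by blast

lemma carrierG_UN: "carrier G = (\<Union>i\<in>{0<..n}. Cs i)"
proof (intro equalityI subsetI)
  fix x assume x: "x \<in> carrier G"
  then have "H #> x \<in> e ` {0<..n}" using pi_in carrierQ by blast
  then obtain i where "i \<in> {0<..n}" "H #> x = e i" by blast
  then show "x \<in> (\<Union>i\<in>{0<..n}. Cs i)" using x unfolding Cs_def by blast
qed (use Cs_sub in blast)

lemma Cs_disj: "i \<in> {0<..n} \<Longrightarrow> i' \<in> {0<..n} \<Longrightarrow> i \<noteq> i' \<Longrightarrow> Cs i \<inter> Cs i' = {}"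
  unfolding Cs_def using inj_onD[OF e_inj] by blast

lemma card_Cs: "card (Cs k) = card H"
proof -
  have "e k \<in> rcosets H" using e_in[of k] by (simp add: FactGroup_def)
  then show ?thesis using card_rcosets_equal[OF _ subset] Cs_eq by simp
qed

lemma CP_swap: "CP G A B = CP G B A"
proof -
  have "{(x, y). x \<in> A \<and> y \<in> B \<and> x \<otimes> y = y \<otimes> x} = (\<lambda>(x, y). (y, x)) ` {(x, y). x \<in> B \<and> y \<in> A \<and> x \<otimes> y = y \<otimes> x}"
    by auto
  moreover have "inj_on (\<lambda>(x, y). (y, x)) {(x, y). x \<in> B \<and> y \<in> A \<and> x \<otimes> y = y \<otimes> x}"
    by (auto simp: inj_on_def)
  ultimately show ?thesis unfolding CP_def by (simp add: card_image)
qed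

lemma P_sym: "P i j = P j i"
  unfolding P_def by (rule CP_swap)

lemma P_per: "P (i + n) j = P i j"
proof -
  have "e (i + n) = e i" using e_mod[of "i + n"] e_mod[of i] by simp
  then show ?thesis unfolding P_def Cs_def by simp
qed

lemma P_add: "P (i + j) j = P i j"
proof -
  define S1 where "S1 = {(x, y). x \<in> Cs i \<and> y \<in> Cs j \<and> x \<otimes> y = y \<otimes> x}"
  define S2 where "S2 = {(x, y). x \<in> Cs (i + j) \<and> y \<in> Cs j \<and> x \<otimes> y = y \<otimes> x}"
  define f where "f = (\<lambda>(x, y). (x \<otimes> y, y))"
  have img: "f ` S1 = S2"
  proof (intro equalityI subsetI)
    fix z assume "z \<in> f ` S1"
    then obtain a where a: "a \<in> S1" "z = f a" by (rule imageE)
    obtain x y where axy: "a = (x, y)" by (cases a)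
    have xy: "x \<in> Cs i" "y \<in> Cs j" "x \<otimes> y = y \<otimes> x" using a(1) axy by (simp_all add: S1_def)
    have z: "z = (x \<otimes> y, y)" using a(2) axy by (simp add: f_def)
    have xG: "x \<in> carrier G" and yG: "y \<in> carrier G" using xy Cs_sub by blast+
    have "H #> (x \<otimes> y) = e (i + j)"
      using pi_mult[OF xG yG] xy e_add unfolding Cs_def by simp
    then have "x \<otimes> y \<in> Cs (i + j)" using xG yG unfolding Cs_def by simp
    moreover have "(x \<otimes> y) \<otimes> y = y \<otimes> (x \<otimes> y)"
    proof -
      have "(x \<otimes> y) \<otimes> y = (y \<otimes> x) \<otimes> y" using xy(3) by simp
      also have "\<dots> = y \<otimes> (x \<otimes> y)" using xG yG by (simp add: m_assoc)
      finally show ?thesis .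
    qed
    ultimately show "z \<in> S2" using z xy unfolding S2_def by simp
  next
    fix z assume "z \<in> S2"
    then obtain x' y where xy: "x' \<in> Cs (i + j)" "y \<in> Cs j" "x' \<otimes> y = y \<otimes> x'" and z: "z = (x', y)"
      unfolding S2_def by blast
    have xG: "x' \<in> carrier G" and yG: "y \<in> carrier G" using xy Cs_sub by blast+
    define x where "x = x' \<otimes> inv y"
    have x0: "x \<in> carrier G" using xG yG by (simp add: x_def)
    have "H #> x = (H #> x') \<otimes>\<^bsub>G Mod H\<^esub> inv\<^bsub>G Mod H\<^esub> (H #> y)"
      unfolding x_def using pi_mult[OF xG inv_closed[OF yG]] pi_inv[OF yG] by simp
    also have "\<dots> = (e i \<otimes>\<^bsub>G Mod H\<^esub> e j) \<otimes>\<^bsub>G Mod H\<^esub> inv\<^bsub>G Mod H\<^esub> (e j)"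
      using xy e_add unfolding Cs_def by simp
    also have "\<dots> = e i" using e_in by (simp add: Q.m_assoc del: mult_FactGroup one_FactGroup)
    finally have "x \<in> Cs i" using x0 unfolding Cs_def by simp
    moreover have xy1: "x \<otimes> y = x'" using xG yG by (simp add: x_def m_assoc)
    moreover have "y \<otimes> x = x'"
    proof -
      have "y \<otimes> x = (y \<otimes> x') \<otimes> inv y" using xG yG by (simp add: x_def m_assoc)
      also have "\<dots> = (x' \<otimes> y) \<otimes> inv y" using xy(3) by simp
      also have "\<dots> = x'" using xG yG by (simp add: m_assoc)
      finally show ?thesis .
    qed
    ultimately have "(x, y) \<in> S1" using xy unfolding S1_def by simp
    moreover have "f (x, y) = z" using xy1 z by (simp add: f_def)
    ultimately show "z \<in> f ` S1" by blast
  qed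
  have inj: "inj_on f S1"
  proof (rule inj_onI)
    fix a b assume a: "a \<in> S1" and b: "b \<in> S1" and ab: "f a = f b"
    obtain x y where axy: "a = (x, y)" "x \<in> carrier G" "y \<in> carrier G"
      using a Cs_sub unfolding S1_def by blast
    obtain x' y' where bxy: "b = (x', y')" "x' \<in> carrier G" "y' \<in> carrier G"
      using b Cs_sub unfolding S1_def by blast
    have "y = y'" "x \<otimes> y = x' \<otimes> y'" using ab axy bxy by (auto simp: f_def)
    then have "x = x'" using axy bxy r_cancel by blast
    then show "a = b" using axy bxy \<open>y = y'\<close> by simp
  qed
  have "P (i + j) j = card S2" unfolding P_def CP_def S2_def by simp
  also have "\<dots> = card S1" using img inj card_image by blast
  also have "\<dots> = P i j" unfolding P_def CP_def S1_def by simp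
  finally show ?thesis .
qed

lemma P_gcd: "P i j = P (gcd (gcd i j) n) 0"
  by (rule euclid_inv[of P n], rule P_sym, rule P_add, rule P_per)

lemma conj_inv:
  assumes g: "g \<in> carrier G" and x: "x \<in> carrier G"
  shows "H #> (g \<otimes> x \<otimes> inv g) = H #> x"
proof -
  have a: "H #> g \<in> carrier (G Mod H)" and b: "H #> x \<in> carrier (G Mod H)" using pi_in g x by auto
  have "H #> (g \<otimes> x \<otimes> inv g) = ((H #> g) \<otimes>\<^bsub>G Mod H\<^esub> (H #> x)) \<otimes>\<^bsub>G Mod H\<^esub> inv\<^bsub>G Mod H\<^esub> (H #> g)"
    using pi_mult pi_inv g x by simp
  also have "\<dots> = ((H #> x) \<otimes>\<^bsub>G Mod H\<^esub> (H #> g)) \<otimes>\<^bsub>G Mod H\<^esub> inv\<^bsub>G Mod H\<^esub> (H #> g)"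
    using Q.m_comm[OF a b] by simp
  also have "\<dots> = H #> x" using a b by (simp add: Q.m_assoc del: mult_FactGroup one_FactGroup)
  finally show ?thesis .
qed

definition Kd :: "nat \<Rightarrow> 'a set" where
  "Kd d = {x \<in> carrier G. (H #> x) [^]\<^bsub>G Mod H\<^esub> d = \<one>\<^bsub>G Mod H\<^esub>}"

lemma pow_e: "(e i) [^]\<^bsub>G Mod H\<^esub> d = e (i * d)"
  unfolding e_def using t_in by (simp add: Q.nat_pow_pow)

lemma Kd_UN:
  assumes "d dvd n"
  shows "Kd d = (\<Union>i\<in>Qs n d. Cs i)"
proof (intro equalityI subsetI)
  fix x assume x: "x \<in> Kd d"
  then have xG: "x \<in> carrier G" by (simp add: Kd_def)
  then obtain i where i: "i \<in> {0<..n}" "x \<in> Cs i" using carrierG_UN by blast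
  then have "H #> x = e i" by (simp add: Cs_def)
  then have "e (i * d) = \<one>\<^bsub>G Mod H\<^esub>" using x pow_e by (simp add: Kd_def del: one_FactGroup)
  then have "n dvd i * d" using e_eq_one by blast
  then have "n div d dvd i" using dvd_div_iff_aux[OF n_pos assms] by blast
  then have "i \<in> Qs n d" using i by (simp add: Qs_def)
  then show "x \<in> (\<Union>i\<in>Qs n d. Cs i)" using i by blast
next
  fix x assume "x \<in> (\<Union>i\<in>Qs n d. Cs i)"
  then obtain i where i: "i \<in> Qs n d" "x \<in> Cs i" by blast
  then have xG: "x \<in> carrier G" and hx: "H #> x = e i" by (auto simp: Cs_def)
  have "n div d dvd i" using i by (simp add: Qs_def)
  then have "n dvd i * d" using dvd_div_iff_aux[OF n_pos assms] by blast
  then have "e (i * d) = \<one>\<^bsub>G Mod H\<^esub>" using e_eq_one by blast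
  then show "x \<in> Kd d" using xG hx pow_e by (simp add: Kd_def del: one_FactGroup)
qed

lemma Kd_subgroup: "subgroup (Kd d) G"
proof (rule subgroupI)
  show "Kd d \<subseteq> carrier G" by (auto simp: Kd_def)
  have "H #> \<one> = \<one>\<^bsub>G Mod H\<^esub>" using subset by simp
  then have "\<one> \<in> Kd d" by (simp add: Kd_def del: one_FactGroup)
  then show "Kd d \<noteq> {}" by blast
next
  fix a assume a: "a \<in> Kd d"
  then have aG: "a \<in> carrier G" and pa: "(H #> a) [^]\<^bsub>G Mod H\<^esub> d = \<one>\<^bsub>G Mod H\<^esub>" by (auto simp: Kd_def simp del: one_FactGroup)
  have "(H #> inv a) [^]\<^bsub>G Mod H\<^esub> d = inv\<^bsub>G Mod H\<^esub> ((H #> a) [^]\<^bsub>G Mod H\<^esub> d)"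
    using pi_inv[OF aG] Q.nat_pow_inv[OF pi_in[OF aG]] by simp
  also have "\<dots> = \<one>\<^bsub>G Mod H\<^esub>" using pa by (simp del: one_FactGroup)
  finally show "inv a \<in> Kd d" using aG by (simp add: Kd_def del: one_FactGroup)
next
  fix a b assume a: "a \<in> Kd d" and b: "b \<in> Kd d"
  then have aG: "a \<in> carrier G" and pa: "(H #> a) [^]\<^bsub>G Mod H\<^esub> d = \<one>\<^bsub>G Mod H\<^esub>"
    and bG: "b \<in> carrier G" and pb: "(H #> b) [^]\<^bsub>G Mod H\<^esub> d = \<one>\<^bsub>G Mod H\<^esub>" by (auto simp: Kd_def simp del: one_FactGroup)
  have A: "H #> a \<in> carrier (G Mod H)" and B: "H #> b \<in> carrier (G Mod H)" using pi_in aG bG by auto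
  have "(H #> (a \<otimes> b)) [^]\<^bsub>G Mod H\<^esub> d = (H #> a) [^]\<^bsub>G Mod H\<^esub> d \<otimes>\<^bsub>G Mod H\<^esub> (H #> b) [^]\<^bsub>G Mod H\<^esub> d"
    using pi_mult[OF aG bG] Q.pow_mult_distrib[OF Q.m_comm[OF A B] A B] by simp
  also have "\<dots> = \<one>\<^bsub>G Mod H\<^esub>" using pa pb by (simp del: one_FactGroup mult_FactGroup)
  finally show "a \<otimes> b \<in> Kd d" using aG bG by (simp add: Kd_def del: one_FactGroup)
qed

lemma H_Kd: "H \<subseteq> Kd d"
proof
  fix x assume x: "x \<in> H"
  then have xG: "x \<in> carrier G" using subset by blast
  have "H #> x = H" by (rule coset_join2[OF xG subgroup_axioms x])
  then have "H #> x = \<one>\<^bsub>G Mod H\<^esub>" by simp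
  then show "x \<in> Kd d" using xG by (simp add: Kd_def del: one_FactGroup)
qed

lemma RCOSETS_sub: "RCOSETS (G\<lparr>carrier := K\<rparr>) H = (\<lambda>a. H #> a) ` K"
  unfolding RCOSETS_def by auto

lemma img_Kd:
  assumes "d dvd n"
  shows "(\<lambda>a. H #> a) ` Kd d = e ` Qs n d"
proof (intro equalityI subsetI)
  fix q assume "q \<in> (\<lambda>a. H #> a) ` Kd d"
  then obtain x where x: "x \<in> Kd d" "q = H #> x" by blast
  then obtain i where "i \<in> Qs n d" "x \<in> Cs i" using Kd_UN[OF assms] by blast
  then show "q \<in> e ` Qs n d" using x by (auto simp: Cs_def)
next
  fix q assume "q \<in> e ` Qs n d"
  then obtain i where i: "i \<in> Qs n d" "q = e i" by blast
  obtain a where a: "a \<in> carrier G" "e i = H #> a" using e_in[of i] unfolding carrier_FactGroup by blast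
  have "a \<in> Cs i" using a by (simp add: Cs_def)
  then have "a \<in> Kd d" using Kd_UN[OF assms] i by blast
  then show "q \<in> (\<lambda>a. H #> a) ` Kd d" using a i by blast
qed

lemma card_Qs: "d dvd n \<Longrightarrow> card (Qs n d) = d"
proof -
  assume dn: "d dvd n"
  obtain b where b: "n = d * b" using dn by (auto elim: dvdE)
  have d0: "d > 0" "b > 0" using b n_pos by auto
  have nb: "n div d = b" using b d0 by simp
  have "card (Qs n d) = n div (n div d)"
    unfolding Qs_def by (rule card_multiples) (use nb d0 b in auto)
  then show ?thesis using nb b d0 by simp
qed

lemma card_img_Kd: "d dvd n \<Longrightarrow> card ((\<lambda>a. H #> a) ` Kd d) = d"
proof -
  assume dn: "d dvd n"
  have "Qs n d \<subseteq> {0<..n}" by (auto simp: Qs_def)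
  then have "inj_on e (Qs n d)" using e_inj inj_on_subset by blast
  then show ?thesis using img_Kd[OF dn] card_Qs[OF dn] by (simp add: card_image)
qed

lemma K_sub_eq:
  assumes dn: "d dvd n"
  shows "K_sub G H d = Kd d"
  unfolding K_sub_def
proof (rule the_equality)
  show "subgroup (Kd d) G \<and> H \<subseteq> Kd d \<and> card (RCOSETS (G\<lparr>carrier := Kd d\<rparr>) H) = d"
    using Kd_subgroup H_Kd card_img_Kd[OF dn] by (simp add: RCOSETS_sub)
next
  fix K assume K: "subgroup K G \<and> H \<subseteq> K \<and> card (RCOSETS (G\<lparr>carrier := K\<rparr>) H) = d"
  define S where "S = (\<lambda>a. H #> a) ` K"
  have cS: "card S = d" using K by (simp add: S_def RCOSETS_sub)
  have KG: "K \<subseteq> carrier G" using K subgroup.subset by blast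
  have sS: "subgroup S (G Mod H)" unfolding S_def
    using group_hom.subgroup_img_is_subgroup[OF pi_hom] K by blast
  have gS: "group ((G Mod H)\<lparr>carrier := S\<rparr>)" using subgroup.subgroup_is_group[OF sS Q.is_group] .
  have powS: "q [^]\<^bsub>G Mod H\<^esub> d = \<one>\<^bsub>G Mod H\<^esub>" if q: "q \<in> S" for q
  proof -
    have "q [^]\<^bsub>(G Mod H)\<lparr>carrier := S\<rparr>\<^esub> order ((G Mod H)\<lparr>carrier := S\<rparr>) = \<one>\<^bsub>(G Mod H)\<lparr>carrier := S\<rparr>\<^esub>"
      using group.pow_order_eq_1[OF gS] q by simp
    moreover have "order ((G Mod H)\<lparr>carrier := S\<rparr>) = d" using cS by (simp add: order_def)
    ultimately show ?thesis by (simp add: Q.nat_pow_consistent[symmetric] del: one_FactGroup)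
  qed
  have KK: "K \<subseteq> Kd d"
  proof
    fix k assume k: "k \<in> K"
    then have "H #> k \<in> S" by (simp add: S_def)
    then show "k \<in> Kd d" using powS k KG by (auto simp: Kd_def simp del: one_FactGroup)
  qed
  have SI: "S = (\<lambda>a. H #> a) ` Kd d"
  proof (rule card_subset_eq)
    show "finite ((\<lambda>a. H #> a) ` Kd d)" using finG Kd_subgroup subgroup.subset
      by (metis finite_imageI finite_subset)
    show "S \<subseteq> (\<lambda>a. H #> a) ` Kd d" using KK by (auto simp: S_def)
    show "card S = card ((\<lambda>a. H #> a) ` Kd d)" using cS card_img_Kd[OF dn] by simp
  qed
  have "Kd d \<subseteq> K"
  proof
    fix x assume x: "x \<in> Kd d"
    then have xG: "x \<in> carrier G" by (simp add: Kd_def)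
    have "H #> x \<in> S" using SI x by blast
    then obtain k where k: "k \<in> K" "H #> x = H #> k" by (auto simp: S_def)
    have "x \<in> H #> k" using rcos_self[OF xG subgroup_axioms] k by simp
    then obtain h where h: "h \<in> H" "x = h \<otimes> k" by (auto simp: r_coset_def)
    have "h \<in> K" using h K by blast
    then show "x \<in> K" using h k K subgroup.m_closed by metis
  qed
  then show "K = Kd d" using KK by blast
qed

lemma Gamma_Cs:
  assumes R: "R \<in> carrier (G Mod H)" and oR: "Q.ord R = c"
  shows "\<exists>j\<in>{0<..n}. Cs j = R \<and> gcd j n = n div c"
proof -
  obtain j where j: "j \<in> {0<..n}" "R = e j" using R carrierQ by blast
  have "Q.ord R = n div gcd n j" using j Q.ord_pow_gen[OF t_in, of j] ord_t by (simp add: e_def)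
  then have c0: "c = n div gcd n j" using oR by simp
  obtain g where gd: "g = gcd n j" by blast
  have c: "c = n div g" using c0 gd by simp
  have "g dvd n" using gd by simp
  then obtain m where m: "n = g * m" using dvdE by blast
  have gp: "g > 0" using n_pos gd by simp
  have "c = m" using c m gp by simp
  then have "n div c = g" using m gp n_pos by simp
  then have "n div c = gcd n j" using gd by simp
  then show ?thesis using j Cs_eq by (auto simp: gcd.commute)
qed

lemma order_G: "order G = n * card H"
proof -
  have "card (rcosets H) * card H = order G" by (rule lagrange[OF subgroup_axioms])
  moreover have "card (rcosets H) = n" using ordQ by (simp add: order_def FactGroup_def)
  ultimately show ?thesis by simp
qed

lemma H_pos: "card H > 0"
proof -
  have "finite H" using finG subset finite_subset by blast
  moreover have "\<one> \<in> H" by simp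
  ultimately show ?thesis using card_gt_0_iff by blast
qed

lemma count_T:
  "real (n_classes_in G (Cs j)) * real (order G) = (\<Sum>i\<in>{0<..n}. real (P i j))"
proof -
  have inv: "g \<otimes> y \<otimes> inv g \<in> Cs j" if g: "g \<in> carrier G" and y: "y \<in> Cs j" for g y
  proof -
    have yG: "y \<in> carrier G" using y Cs_sub by blast
    have "H #> (g \<otimes> y \<otimes> inv g) = H #> y" by (rule conj_inv[OF g yG])
    then show ?thesis using y g yG by (simp add: Cs_def)
  qed
  have "real (n_classes_in G (Cs j)) * real (order G) = real (CP G (carrier G) (Cs j))"
    unfolding n_classes_in_def by (rule class_count[OF is_group finG Cs_sub inv])
  also have "CP G (carrier G) (Cs j) = CP G (\<Union>i\<in>{0<..n}. Cs i) (Cs j)"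
    using carrierG_UN by simp
  also have "\<dots> = (\<Sum>i\<in>{0<..n}. CP G (Cs i) (Cs j))"
    by (rule CP_UN_left) (auto simp: Cs_fin Cs_disj)
  finally show ?thesis by (simp add: P_def)
qed

lemma fin_UN_Cs: "finite (\<Union>i\<in>I. Cs i)" if "finite I" for I
  using that Cs_fin by blast

lemma count_S:
  assumes bn: "b dvd n"
  shows "real (n_classes_in G (Kd b)) * real (order G) = (\<Sum>i\<in>{0<..n}. \<Sum>j\<in>Qs n b. real (P i j))"
proof -
  have KG: "Kd b \<subseteq> carrier G" by (auto simp: Kd_def)
  have inv: "g \<otimes> y \<otimes> inv g \<in> Kd b" if g: "g \<in> carrier G" and y: "y \<in> Kd b" for g y
  proof -
    have yG: "y \<in> carrier G" using y KG by blast
    have "H #> (g \<otimes> y \<otimes> inv g) = H #> y" by (rule conj_inv[OF g yG])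
    then show ?thesis using y g yG by (simp add: Kd_def del: one_FactGroup)
  qed
  have QsS: "Qs n b \<subseteq> {0<..n}" by (auto simp: Qs_def)
  have finQs: "finite (Qs n b)" by (simp add: Qs_def)
  have dQ: "\<And>i i'. i \<in> Qs n b \<Longrightarrow> i' \<in> Qs n b \<Longrightarrow> i \<noteq> i' \<Longrightarrow> Cs i \<inter> Cs i' = {}"
    using Cs_disj QsS by blast
  have "real (n_classes_in G (Kd b)) * real (order G) = real (CP G (carrier G) (Kd b))"
    unfolding n_classes_in_def by (rule class_count[OF is_group finG KG inv])
  also have "CP G (carrier G) (Kd b) = CP G (\<Union>i\<in>{0<..n}. Cs i) (\<Union>j\<in>Qs n b. Cs j)"
    using carrierG_UN Kd_UN[OF bn] by simp
  also have "\<dots> = (\<Sum>i\<in>{0<..n}. CP G (Cs i) (\<Union>j\<in>Qs n b. Cs j))"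
    by (rule CP_UN_left) (auto simp: Cs_fin Cs_disj intro: fin_UN_Cs[OF finQs])
  also have "\<dots> = (\<Sum>i\<in>{0<..n}. \<Sum>j\<in>Qs n b. CP G (Cs i) (Cs j))"
  proof (intro sum.cong refl)
    fix i
    show "CP G (Cs i) (\<Union>j\<in>Qs n b. Cs j) = (\<Sum>j\<in>Qs n b. CP G (Cs i) (Cs j))"
      by (rule CP_UN_right[OF finQs Cs_fin Cs_fin dQ])
  qed
  finally show ?thesis by (simp add: P_def)
qed

lemma count_Sstar:
  assumes dn: "d dvd n"
  shows "real (card (conj_classes (G\<lparr>carrier := Kd d\<rparr>))) * real (d * card H)
       = (\<Sum>i\<in>Qs n d. \<Sum>j\<in>Qs n d. real (P i j))"
proof -
  have gK: "group (G\<lparr>carrier := Kd d\<rparr>)" by (rule subgroup.subgroup_is_group[OF Kd_subgroup is_group])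
  have "Kd d \<subseteq> carrier G" using Kd_subgroup subgroup.subset by blast
  then have finK: "finite (carrier (G\<lparr>carrier := Kd d\<rparr>))" using finG finite_subset by simp
  have QsS: "Qs n d \<subseteq> {0<..n}" by (auto simp: Qs_def)
  have finQs: "finite (Qs n d)" by (simp add: Qs_def)
  have dQ: "\<And>i i'. i \<in> Qs n d \<Longrightarrow> i' \<in> Qs n d \<Longrightarrow> i \<noteq> i' \<Longrightarrow> Cs i \<inter> Cs i' = {}"
    using Cs_disj QsS by blast
  have eq1: "real (card (conj_classes (G\<lparr>carrier := Kd d\<rparr>))) * real (order (G\<lparr>carrier := Kd d\<rparr>))
      = real (CP (G\<lparr>carrier := Kd d\<rparr>) (Kd d) (Kd d))"
    using class_count_all[OF gK finK] by simp
  have oK: "order (G\<lparr>carrier := Kd d\<rparr>) = d * card H"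
  proof -
    have "order (G\<lparr>carrier := Kd d\<rparr>) = card (\<Union>i\<in>Qs n d. Cs i)" using Kd_UN[OF dn] by (simp add: order_def)
    also have "\<dots> = (\<Sum>i\<in>Qs n d. card (Cs i))"
      by (rule card_UN_disjoint) (use finQs Cs_fin dQ in blast)+
    also have "\<dots> = d * card H" using card_Qs[OF dn] by (simp add: card_Cs)
    finally show ?thesis .
  qed
  have "CP (G\<lparr>carrier := Kd d\<rparr>) (Kd d) (Kd d) = CP G (\<Union>i\<in>Qs n d. Cs i) (\<Union>j\<in>Qs n d. Cs j)"
    unfolding CP_def Kd_UN[OF dn] by simp
  also have "\<dots> = (\<Sum>i\<in>Qs n d. CP G (Cs i) (\<Union>j\<in>Qs n d. Cs j))"
    by (rule CP_UN_left[OF finQs Cs_fin fin_UN_Cs[OF finQs] dQ])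
  also have "\<dots> = (\<Sum>i\<in>Qs n d. \<Sum>j\<in>Qs n d. CP G (Cs i) (Cs j))"
  proof (intro sum.cong refl)
    fix i
    show "CP G (Cs i) (\<Union>j\<in>Qs n d. Cs j) = (\<Sum>j\<in>Qs n d. CP G (Cs i) (Cs j))"
      by (rule CP_UN_right[OF finQs Cs_fin Cs_fin dQ])
  qed
  finally have cp: "CP (G\<lparr>carrier := Kd d\<rparr>) (Kd d) (Kd d) = (\<Sum>i\<in>Qs n d. \<Sum>j\<in>Qs n d. P i j)"
    by (simp add: P_def)
  show ?thesis using eq1 oK cp by simp
qed

theorem main:
  fixes \<Gamma> :: "nat \<Rightarrow> 'a set" and d :: nat
  assumes \<Gamma>: "\<And>c. c dvd n \<Longrightarrow> \<Gamma> c \<in> carrier (G Mod H) \<and> group.ord (G Mod H) (\<Gamma> c) = c"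
    and dn: "d dvd n"
  shows "(real (card (conj_classes (G\<lparr>carrier := K_sub G H d\<rparr>))) =
           real n * (\<Sum>c | c dvd n. \<Sum>a | a dvd c.
              real_of_int (moebius_mu (c div a)) * (real (gcd a d) / real (lcm a d))
              * real (n_classes_in G (\<Gamma> c)))) \<and>
         real (card (conj_classes (G\<lparr>carrier := K_sub G H d\<rparr>))) =
           real n * (\<Sum>c | c dvd n. \<Sum>a | a dvd c. \<Sum>b | b dvd c.
              real_of_int (moebius_mu (c div a) * moebius_mu (c div b)) / real (totient c)
              * (real (gcd a d) / real (lcm a d))
              * real (n_classes_in G (K_sub G H b)))"
proof -
  define h where "h = real (card H)"
  have h0: "h > 0" using H_pos by (simp add: h_def)
  define p where "p g = real (P g 0) / h" for g
  have PPe: "real (P i j) = h * PP n p i j" for i j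
    using h0 P_gcd[of i j] by (simp add: PP_def p_def)
  have oG: "real (order G) = real n * h" by (simp add: order_G h_def)
  have Tc: "real (n_classes_in G (\<Gamma> c)) = Fs n p (n div c) / real n" if c: "c dvd n" for c
  proof -
    obtain j where j: "j \<in> {0<..n}" "Cs j = \<Gamma> c" "gcd j n = n div c"
      using Gamma_Cs[of "\<Gamma> c" c] \<Gamma>[OF c] by blast
    have "real (n_classes_in G (\<Gamma> c)) * (real n * h) = (\<Sum>i\<in>{0<..n}. real (P i j))"
      using count_T[of j] j(2) oG by simp
    also have "\<dots> = h * (\<Sum>i\<in>{0<..n}. PP n p i j)" by (simp add: PPe sum_distrib_left)
    also have "(\<Sum>i\<in>{0<..n}. PP n p i j) = Fs n p (n div c)"
      unfolding Fs_def PP_def by (intro sum.cong refl) (simp add: gcd.assoc j(3))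
    finally show ?thesis using h0 n_pos by (simp add: field_simps)
  qed
  have Sb: "real (n_classes_in G (K_sub G H b)) = (\<Sum>i\<in>{0<..n}. \<Sum>j\<in>Qs n b. PP n p i j) / real n"
    if b: "b dvd n" for b
  proof -
    have "real (n_classes_in G (K_sub G H b)) * (real n * h) = (\<Sum>i\<in>{0<..n}. \<Sum>j\<in>Qs n b. real (P i j))"
      using count_S[OF b] K_sub_eq[OF b] oG by simp
    also have "\<dots> = h * (\<Sum>i\<in>{0<..n}. \<Sum>j\<in>Qs n b. PP n p i j)" by (simp add: PPe sum_distrib_left)
    finally show ?thesis using h0 n_pos by (simp add: field_simps)
  qed
  have Ss: "real (card (conj_classes (G\<lparr>carrier := K_sub G H d\<rparr>))) = (\<Sum>i\<in>Qs n d. \<Sum>j\<in>Qs n d. PP n p i j) / real d"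
  proof -
    have d0: "d > 0" using dn n_pos by (auto intro: dvd_pos_nat)
    have "real (card (conj_classes (G\<lparr>carrier := K_sub G H d\<rparr>))) * (real d * h) = (\<Sum>i\<in>Qs n d. \<Sum>j\<in>Qs n d. real (P i j))"
      using count_Sstar[OF dn] K_sub_eq[OF dn] by (simp add: h_def)
    also have "\<dots> = h * (\<Sum>i\<in>Qs n d. \<Sum>j\<in>Qs n d. PP n p i j)" by (simp add: PPe sum_distrib_left)
    finally show ?thesis using h0 d0 by (simp add: field_simps)
  qed
  have part1: "real (card (conj_classes (G\<lparr>carrier := K_sub G H d\<rparr>))) =
           real n * (\<Sum>c | c dvd n. \<Sum>a | a dvd c.
              real_of_int (moebius_mu (c div a)) * (real (gcd a d) / real (lcm a d))
              * real (n_classes_in G (\<Gamma> c)))"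
  proof -
    have "(\<Sum>c | c dvd n. \<Sum>a | a dvd c.
              real_of_int (moebius_mu (c div a)) * (real (gcd a d) / real (lcm a d))
              * real (n_classes_in G (\<Gamma> c)))
        = (\<Sum>c | c dvd n. \<Sum>a | a dvd c.
              mu (c div a) * (real (gcd a d) / real (lcm a d)) * (Fs n p (n div c) / real n))"
      by (intro sum.cong refl) (simp add: Tc)
    then show ?thesis using Ss identity1[OF n_pos dn, of p] by simp
  qed
  have part2: "real (card (conj_classes (G\<lparr>carrier := K_sub G H d\<rparr>))) =
           real n * (\<Sum>c | c dvd n. \<Sum>a | a dvd c. \<Sum>b | b dvd c.
              real_of_int (moebius_mu (c div a) * moebius_mu (c div b)) / real (totient c)
              * (real (gcd a d) / real (lcm a d))
              * real (n_classes_in G (K_sub G H b)))"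
  proof -
    have "(\<Sum>c | c dvd n. \<Sum>a | a dvd c. \<Sum>b | b dvd c.
              real_of_int (moebius_mu (c div a) * moebius_mu (c div b)) / real (totient c)
              * (real (gcd a d) / real (lcm a d))
              * real (n_classes_in G (K_sub G H b)))
        = (\<Sum>c | c dvd n. \<Sum>a | a dvd c. \<Sum>b | b dvd c.
         mu (c div a) * mu (c div b) / real (totient c) * (real (gcd a d) / real (lcm a d))
         * ((\<Sum>i\<in>{0<..n}. \<Sum>j\<in>Qs n b. PP n p i j) / real n))"
    proof (intro sum.cong refl)
      fix c a b assume c: "c \<in> {c. c dvd n}" and b: "b \<in> {b. b dvd c}"
      have "b dvd n" using b c by (auto intro: dvd_trans)
      then show "real_of_int (moebius_mu (c div a) * moebius_mu (c div b)) / real (totient c)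
              * (real (gcd a d) / real (lcm a d))
              * real (n_classes_in G (K_sub G H b))
          = mu (c div a) * mu (c div b) / real (totient c) * (real (gcd a d) / real (lcm a d))
         * ((\<Sum>i\<in>{0<..n}. \<Sum>j\<in>Qs n b. PP n p i j) / real n)"
        by (simp add: Sb)
    qed
    then show ?thesis using Ss identity2[OF n_pos dn, of p] by simp
  qed
  show ?thesis using part1 part2 by blast
qed

end


theorem theorem6p1:
  fixes G :: "('a, 'b) monoid_scheme" and H :: "'a set" and n d :: nat
    and \<Gamma> :: "nat \<Rightarrow> 'a set"
  assumes "group G" and "finite (carrier G)" and "H \<lhd> G"
    and "cyclic_group (G Mod H)" and "order (G Mod H) = n"
    and "\<And>c. c dvd n \<Longrightarrow> \<Gamma> c \<in> carrier (G Mod H) \<and> group.ord (G Mod H) (\<Gamma> c) = c"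
    and "d dvd n"
  shows "(real (card (conj_classes (G\<lparr>carrier := K_sub G H d\<rparr>))) =
           real n * (\<Sum>c | c dvd n. \<Sum>a | a dvd c.
              real_of_int (moebius_mu (c div a)) * (real (gcd a d) / real (lcm a d))
              * real (n_classes_in G (\<Gamma> c)))) \<and>
         real (card (conj_classes (G\<lparr>carrier := K_sub G H d\<rparr>))) =
           real n * (\<Sum>c | c dvd n. \<Sum>a | a dvd c. \<Sum>b | b dvd c.
              real_of_int (moebius_mu (c div a) * moebius_mu (c div b)) / real (totient c)
              * (real (gcd a d) / real (lcm a d))
              * real (n_classes_in G (K_sub G H b)))"
proof -
  interpret N: normal H G using assms(3) .
  have gQ: "group (G Mod H)" by (rule N.factorgroup_is_group)
  obtain t where t: "t \<in> carrier (G Mod H)" "carrier (G Mod H) = range (\<lambda>k::int. t [^]\<^bsub>G Mod H\<^esub> k)"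
    using group.cyclic_group[OF gQ] assms(4) by blast
  interpret cq H G n t
    by (intro cq.intro cq_axioms.intro assms(3) assms(2) assms(5) t)
  show ?thesis by (rule main[OF assms(6) assms(7)])
qed

end
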